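(* Consider two-level PFASST for a linear problem with Gauss–Radau nodes as described in the context, with preconditioning using the LU trick, and assume $\mathbf{A}$ and $\tilde{\mathbf{A}}$ are invertible. For $k\in\mathbb{N}$ smoothing steps let $\mathbf{T}_{\mathrm{PFASST}}(\mu,k)=\big(\mathbf{T}_S(\mu)\big)^k\,\mathbf{T}_{\mathrm{CGC}}(\mu)$. Then PFASST converges if $\mu$ is large enough and at least $M$ smoothing steps are performed: for every $k\ge M$ there exist a fixed value $\mu^*_\infty>0$ and a constant $c>0$ independent of $\mu$ (but depending on $k$) such that for all $\mu>\mu^*_\infty$, $$\rho\big(\mathbf{T}_{\mathrm{PFASST}}(\mu,k)\big)\le\frac{c}{\mu}.$$
   Context: Fix positive integers $L$ (time steps), $M$ (collocation nodes), $N$ (spatial degrees of freedom). Let $0<\tau_1<\dots<\tau_M=1$ be the (right) Gauss–Radau nodes on $[0,1]$, $\ell_j$ the Lagrange basis polynomials, $\mathbf{Q}=(q_{m,j})$ with $q_{m,j}=\int_0^{\tau_m}\ell_j(s)\,ds$. LU trick: $\mathbf{Q}^T=\mathbf{L}_Q\mathbf{U}_Q$ with $\mathbf{L}_Q$ unit lower triangular, $\mathbf{U}_Q$ upper triangular, and $\mathbf{Q}_\Delta=\mathbf{U}_Q^T$; on the coarse level, with $\tilde M\le M$ coarse Gauss–Radau nodes and corresponding collocation matrix $\tilde{\mathbf{Q}}$, analogously $\tilde{\mathbf{Q}}_\Delta$ is obtained from the LU decomposition of $\tilde{\mathbf{Q}}^T$. Let $\mathbf{A}\in\mathbb{C}^{N\times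 N}$, $\tilde{\mathbf{A}}\in\mathbb{C}^{\tilde N\times\tilde N}$ ($\tilde N\le N$), $\mu>0$. Let $\mathbf{N}_M$ ($M\times M$) and $\tilde{\mathbf{N}}_{\tilde M}$ ($\tilde M\times\tilde M$) have ones in their last column and zeros elsewhere, $\mathbf{H}=\mathbf{N}_M\otimes\mathbf{I}_N$, $\tilde{\mathbf{H}}=\tilde{\mathbf{N}}_{\tilde M}\otimes\mathbf{I}_{\tilde N}$, $\mathbf{E}\in\mathbb{R}^{L\times L}$ with ones on the first subdiagonal and zeros elsewhere. $\mathbf{C}=\mathbf{I}_{LMN}-\mu\,\mathbf{I}_L\otimes\mathbf{Q}\otimes\mathbf{A}-\mathbf{E}\otimes\mathbf{H}$, $\hat{\mathbf{P}}=\mathbf{I}_{LMN}-\mu\,\mathbf{I}_L\otimes\mathbf{Q}_\Delta\otimes\mathbf{A}$, $\tilde{\mathbf{P}}=\mathbf{I}_{L\tilde M\tilde N}-\mu\,\mathbf{I}_L\otimes\tilde{\mathbf{Q}}_\Delta\otimes\tilde{\mathbf{A}}-\mathbf{E}\otimes\tilde{\mathbf{H}}$, both assumed invertible. Restriction $\mathbf{T}_F^C=\mathbf{I}_L\otimes\mathbf{T}_{F,Q}^C\otimes\mathbf{T}_{F,A}^C\in\mathbb{R}^{L\tilde M\tilde N\times LMN}$ and interpolation $\mathbf{T}_C^F=\mathbf{I}_L\otimes\mathbf{T}_{C,Q}^F\otimes\mathbf{T}_{C,A}^F\in\mathbb{R}^{LMN\times L\tilde M\tilde N}$, with $(\mathbf{E}\otimes\tilde{\mathbf{H}})\mathbf{T}_F^C=\mathbf{T}_F^C(\mathbf{E}\otimes\mathbf{H})$.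 $\mathbf{T}_S(\mu)=\mathbf{I}_{LMN}-\hat{\mathbf{P}}^{-1}\mathbf{C}$ and $\mathbf{T}_{\mathrm{CGC}}(\mu)=\mathbf{I}_{LMN}-\mathbf{T}_C^F\tilde{\mathbf{P}}^{-1}\mathbf{T}_F^C\mathbf{C}$. $\rho$ is the spectral radius. *)

theory Defs
  imports "HOL-Analysis.Analysis" "Jordan_Normal_Form.Spectral_Radius"
begin

definition kron :: "'a :: times mat \<Rightarrow> 'a mat \<Rightarrow> 'a mat" where
  "kron A B = mat (dim_row A * dim_row B) (dim_col A * dim_col B)
     (\<lambda>(i,j). A $$ (i div dim_row B, j div dim_col B) * B $$ (i mod dim_row B, j mod dim_col B))"

(* right Gauss--Radau nodes on [0,1], indexed 0..M-1 (tau_{m+1} in the paper is tau m here):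
   increasing nodes in (0,1] with last node 1 and an M-point quadrature rule on them
   that is exact for all polynomials of degree <= 2M-2 *)
definition right_radau_nodes :: "nat \<Rightarrow> (nat \<Rightarrow> real) \<Rightarrow> bool" where
  "right_radau_nodes M \<tau> \<longleftrightarrow> 0 < M \<and> 0 < \<tau> 0 \<and> (\<forall>i. Suc i < M \<longrightarrow> \<tau> i < \<tau> (Suc i)) \<and> \<tau> (M - 1) = 1 \<and>
     (\<exists>w :: nat \<Rightarrow> real. \<forall>p :: real poly. degree p \<le> 2 * M - 2 \<longrightarrow>
        (\<Sum>j<M. w j * poly p (\<tau> j)) = integral {0..1} (poly p))"

definition lagrange_basis :: "nat \<Rightarrow> (nat \<Rightarrow> real) \<Rightarrow> nat \<Rightarrow> real \<Rightarrow> real" where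
  "lagrange_basis M \<tau> j s = (\<Prod>i\<in>{..<M} - {j}. (s - \<tau> i) / (\<tau> j - \<tau> i))"

definition coll_matrix :: "nat \<Rightarrow> (nat \<Rightarrow> real) \<Rightarrow> complex mat" where
  "coll_matrix M \<tau> = mat M M (\<lambda>(m,j). complex_of_real (integral {0..\<tau> m} (lagrange_basis M \<tau> j)))"

definition unit_lower_triangular :: "'a :: {zero,one} mat \<Rightarrow> bool" where
  "unit_lower_triangular X \<longleftrightarrow> (\<forall>i j. i < dim_row X \<longrightarrow> j < dim_col X \<longrightarrow>
       (i < j \<longrightarrow> X $$ (i,j) = 0) \<and> (i = j \<longrightarrow> X $$ (i,j) = 1))"

(* Q_Delta from the LU trick: Q^T = L_Q U_Q, L_Q unit lower triangular, U_Q upper triangular,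
   Q_Delta = U_Q^T *)
definition LU_trick :: "complex mat \<Rightarrow> complex mat \<Rightarrow> bool" where
  "LU_trick Q QD \<longleftrightarrow> QD \<in> carrier_mat (dim_row Q) (dim_row Q) \<and> upper_triangular (transpose_mat QD) \<and>
     (\<exists>LQ \<in> carrier_mat (dim_row Q) (dim_row Q). unit_lower_triangular LQ \<and>
        transpose_mat Q = LQ * transpose_mat QD)"

definition last_col_ones :: "nat \<Rightarrow> complex mat" where
  "last_col_ones M = mat M M (\<lambda>(i,j). if j = M - 1 then 1 else 0)"

definition subdiag :: "nat \<Rightarrow> complex mat" where
  "subdiag L = mat L L (\<lambda>(i,j). if i = Suc j then 1 else 0)"

definition mat_inv :: "complex mat \<Rightarrow> complex mat" where
  "mat_inv P = (SOME B. inverts_mat P B \<and> inverts_mat B P)"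

definition real_mat :: "real mat \<Rightarrow> complex mat" where
  "real_mat X = map_mat complex_of_real X"

end

theory Submission
  imports Defs
begin

definition mnorm :: "complex mat \<Rightarrow> real" where
  "mnorm A = (\<Sum>i<dim_row A. \<Sum>j<dim_col A. cmod (A $$ (i,j)))"

lemma mnorm_ge0: "0 \<le> mnorm A"
  unfolding mnorm_def by (intro sum_nonneg) auto

lemma entry_le_mnorm: assumes "i < dim_row A" "j < dim_col A"
  shows "cmod (A $$ (i,j)) \<le> mnorm A"
proof -
  have "cmod (A $$ (i,j)) \<le> (\<Sum>j<dim_col A. cmod (A $$ (i,j)))"
    by (rule member_le_sum[where f="\<lambda>j. cmod (A $$ (i,j))"]) (use assms in auto)
  also have "\<dots> \<le> mnorm A" unfolding mnorm_def
    by (rule member_le_sum[where f="\<lambda>i. (\<Sum>j<dim_col A. cmod (A $$ (i,j)))"]) (use assms in \<open>auto intro: sum_nonneg\<close>)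
  finally show ?thesis .
qed

lemma mnorm_mult: assumes A: "A \<in> carrier_mat n m" and B: "B \<in> carrier_mat m p"
  shows "mnorm (A * B) \<le> mnorm A * mnorm B"
proof -
  have "mnorm (A * B) = (\<Sum>i<n. \<Sum>j<p. cmod (\<Sum>k<m. A $$ (i,k) * B $$ (k,j)))"
    unfolding mnorm_def using A B
    by (intro sum.cong refl) (auto simp: scalar_prod_def atLeast0LessThan)
  also have "\<dots> \<le> (\<Sum>i<n. \<Sum>j<p. \<Sum>k<m. cmod (A $$ (i,k)) * cmod (B $$ (k,j)))"
    by (intro sum_mono, rule order.trans[OF norm_sum], simp add: norm_mult)
  also have "\<dots> \<le> (\<Sum>i<n. \<Sum>k<m. \<Sum>l<m. \<Sum>j<p. cmod (A $$ (i,k)) * cmod (B $$ (l,j)))"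
  proof (intro sum_mono)
    fix i assume "i \<in> {..<n}"
    have "(\<Sum>j<p. \<Sum>k<m. cmod (A $$ (i,k)) * cmod (B $$ (k,j)))
        = (\<Sum>k<m. \<Sum>j<p. cmod (A $$ (i,k)) * cmod (B $$ (k,j)))" by (rule sum.swap)
    also have "\<dots> \<le> (\<Sum>k<m. \<Sum>l<m. \<Sum>j<p. cmod (A $$ (i,k)) * cmod (B $$ (l,j)))"
    proof (intro sum_mono)
      fix k assume k: "k \<in> {..<m}"
      show "(\<Sum>j<p. cmod (A $$ (i,k)) * cmod (B $$ (k,j))) \<le> (\<Sum>l<m. \<Sum>j<p. cmod (A $$ (i,k)) * cmod (B $$ (l,j)))"
        by (rule member_le_sum[where f="\<lambda>l. \<Sum>j<p. cmod (A $$ (i,k)) * cmod (B $$ (l,j))"]) (use k in \<open>auto intro!: sum_nonneg\<close>)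
    qed
    finally show "(\<Sum>j<p. \<Sum>k<m. cmod (A $$ (i,k)) * cmod (B $$ (k,j))) \<le> (\<Sum>k<m. \<Sum>l<m. \<Sum>j<p. cmod (A $$ (i,k)) * cmod (B $$ (l,j)))" .
  qed
  also have "\<dots> = (\<Sum>i<n. \<Sum>k<m. cmod (A $$ (i,k)) * (\<Sum>l<m. \<Sum>j<p. cmod (B $$ (l,j))))"
    by (simp add: sum_distrib_left)
  also have "\<dots> = mnorm A * mnorm B"
    unfolding mnorm_def using A B by (simp add: sum_distrib_right carrier_matD)
  finally show ?thesis .
qed

lemma mnorm_add: assumes A: "A \<in> carrier_mat n m" and B: "B \<in> carrier_mat n m"
  shows "mnorm (A + B) \<le> mnorm A + mnorm B"
proof -
  have "mnorm (A + B) = (\<Sum>i<n. \<Sum>j<m. cmod (A $$ (i,j) + B $$ (i,j)))"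
    unfolding mnorm_def using A B by (intro sum.cong refl) auto
  also have "\<dots> \<le> (\<Sum>i<n. \<Sum>j<m. cmod (A $$ (i,j)) + cmod (B $$ (i,j)))"
    by (intro sum_mono norm_triangle_ineq)
  also have "\<dots> = mnorm A + mnorm B"
    unfolding mnorm_def using A B by (simp add: sum.distrib carrier_matD)
  finally show ?thesis .
qed

lemma mnorm_minus: assumes A: "A \<in> carrier_mat n m" and B: "B \<in> carrier_mat n m"
  shows "mnorm (A - B) \<le> mnorm A + mnorm B"
proof -
  have "mnorm (A - B) = (\<Sum>i<n. \<Sum>j<m. cmod (A $$ (i,j) - B $$ (i,j)))"
    unfolding mnorm_def using A B by (intro sum.cong refl) auto
  also have "\<dots> \<le> (\<Sum>i<n. \<Sum>j<m. cmod (A $$ (i,j)) + cmod (B $$ (i,j)))"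
    by (intro sum_mono norm_triangle_ineq4)
  also have "\<dots> = mnorm A + mnorm B"
    unfolding mnorm_def using A B by (simp add: sum.distrib carrier_matD)
  finally show ?thesis .
qed

lemma mnorm_smult: "mnorm (c \<cdot>\<^sub>m A) = cmod c * mnorm A"
  unfolding mnorm_def by (simp add: sum_distrib_left norm_mult)

lemma mnorm_one: "mnorm (1\<^sub>m n) = real n"
proof -
  have "mnorm (1\<^sub>m n) = (\<Sum>i<n. \<Sum>j<n. if i = j then 1 else 0)"
    unfolding mnorm_def by (intro sum.cong refl) auto
  also have "\<dots> = real n" by (simp add: sum.delta)
  finally show ?thesis .
qed

lemma mnorm_zero: "mnorm (0\<^sub>m n m) = 0"
  unfolding mnorm_def by simp

lemma spectral_radius_le_mnorm: assumes A: "A \<in> carrier_mat n n" and n: "0 < n"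
  shows "spectral_radius A \<le> mnorm A"
proof -
  from spectral_radius_mem_max(1)[OF A n] obtain lam where
    ev: "lam \<in> spectrum A" and sr: "spectral_radius A = cmod lam" by auto
  from ev obtain v where v: "eigenvector A v lam" unfolding spectrum_def eigenvalue_def by auto
  hence vc: "v \<in> carrier_vec n" and v0: "v \<noteq> 0\<^sub>v n" and Av: "A *\<^sub>v v = lam \<cdot>\<^sub>v v"
    unfolding eigenvector_def using A by auto
  from v0 vc obtain j0 where j0: "j0 < n" "v $ j0 \<noteq> 0" by (auto simp: vec_eq_iff)
  define S where "S = cmod ` (\<lambda>j. v $ j) ` {..<n}"
  have finS: "finite S" "S \<noteq> {}" unfolding S_def using n by auto
  define mx where "mx = Max S"
  obtain i where i: "i < n" "cmod (v $ i) = mx"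
    using Max_in[OF finS] unfolding mx_def S_def by auto
  have le: "cmod (v $ j) \<le> mx" if "j < n" for j
    unfolding mx_def by (rule Max_ge[OF finS(1)]) (use that in \<open>auto simp: S_def\<close>)
  have "0 < cmod (v $ j0)" using j0(2) by simp
  hence mxpos: "0 < mx" using le[OF j0(1)] by linarith
  have "lam * v $ i = (A *\<^sub>v v) $ i" using Av i vc by simp
  also have "\<dots> = (\<Sum>j<n. A $$ (i,j) * v $ j)" using A vc i
    by (simp add: scalar_prod_def atLeast0LessThan)
  finally have eq: "lam * v $ i = (\<Sum>j<n. A $$ (i,j) * v $ j)" .
  have "cmod lam * mx = cmod (lam * v $ i)" using i by (simp add: norm_mult)
  also have "\<dots> \<le> (\<Sum>j<n. cmod (A $$ (i,j)) * cmod (v $ j))" unfolding eq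
    by (rule order.trans[OF norm_sum]) (simp add: norm_mult)
  also have "\<dots> \<le> (\<Sum>j<n. cmod (A $$ (i,j)) * mx)"
    by (intro sum_mono mult_left_mono le) auto
  also have "\<dots> = (\<Sum>j<n. cmod (A $$ (i,j))) * mx" by (simp add: sum_distrib_right)
  finally have 1: "cmod lam * mx \<le> (\<Sum>j<n. cmod (A $$ (i,j))) * mx" .
  have "(\<Sum>j<n. cmod (A $$ (i,j))) \<le> (\<Sum>i'<n. \<Sum>j<n. cmod (A $$ (i',j)))"
    by (rule member_le_sum[where f="\<lambda>i. (\<Sum>j<n. cmod (A $$ (i,j)))"]) (use i in \<open>auto intro: sum_nonneg\<close>)
  also have "\<dots> = mnorm A" using A by (simp add: mnorm_def carrier_matD)
  finally have "(\<Sum>j<n. cmod (A $$ (i,j))) \<le> mnorm A" .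
  hence "(\<Sum>j<n. cmod (A $$ (i,j))) * mx \<le> mnorm A * mx" using mxpos by simp
  with 1 have "cmod lam * mx \<le> mnorm A * mx" by linarith
  thus ?thesis using mxpos sr by simp
qed

lemma shift_aux: "sum (h :: nat \<Rightarrow> 'a :: comm_monoid_add) {p*d..<p*d+d} = (\<Sum>q<d. h (p*d+q))"
proof -
  have "sum h {p*d..<p*d+d} = sum h {0+p*d..<d+p*d}" by (simp add: add.commute)
  also have "\<dots> = (\<Sum>q\<in>{0..<d}. h (q + p*d))" by (rule sum.shift_bounds_nat_ivl)
  finally show ?thesis by (simp add: atLeast0LessThan add.commute)
qed

lemma sum_div_mod_split:
  fixes h :: "nat \<Rightarrow> 'a :: comm_monoid_add"
  assumes d: "0 < d"
  shows "(\<Sum>k<b*d. h k) = (\<Sum>p<b. \<Sum>q<d. h (p*d+q))"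
proof -
  have "(\<Sum>k<b*d. h k) = (\<Sum>p<b. sum h {p*d..<p*d+d})" by (rule sum.nat_group[symmetric])
  also have "\<dots> = (\<Sum>p<b. \<Sum>q<d. h (p*d+q))"
    by (rule sum.cong[OF refl], rule shift_aux)
  finally show ?thesis .
qed

lemma kron_dims[simp]: "dim_row (kron A B) = dim_row A * dim_row B" "dim_col (kron A B) = dim_col A * dim_col B"
  unfolding kron_def by auto

lemma kron_carrier: "A \<in> carrier_mat a b \<Longrightarrow> B \<in> carrier_mat c d \<Longrightarrow> kron A B \<in> carrier_mat (a*c) (b*d)"
  unfolding carrier_mat_def by simp

lemma index_kron: "i < dim_row A * dim_row B \<Longrightarrow> j < dim_col A * dim_col B \<Longrightarrow>
  kron A B $$ (i,j) = A $$ (i div dim_row B, j div dim_col B) * B $$ (i mod dim_row B, j mod dim_col B)"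
  unfolding kron_def by simp

lemma kron_mult:
  fixes A B C D :: "'a :: comm_semiring_1 mat"
  assumes A: "A \<in> carrier_mat a b" and B: "B \<in> carrier_mat c d"
    and C: "C \<in> carrier_mat b e" and D: "D \<in> carrier_mat d f"
    and c: "0 < c" and d: "0 < d" and f: "0 < f"
  shows "kron A B * kron C D = kron (A * C) (B * D)"
proof (rule eq_matI)
  show "dim_row (kron A B * kron C D) = dim_row (kron (A * C) (B * D))" using A B by simp
  show "dim_col (kron A B * kron C D) = dim_col (kron (A * C) (B * D))" using C D by simp
  fix i j assume i: "i < dim_row (kron (A * C) (B * D))" and j: "j < dim_col (kron (A * C) (B * D))"
  hence i': "i < a * c" and j': "j < e * f" using A B C D by auto
  have id: "i div c < a" "i mod c < c" "j div f < e" "j mod f < f"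
    using i' j' c f by (auto simp: less_mult_imp_div_less)
  have "(kron A B * kron C D) $$ (i,j) = (\<Sum>k<b*d. kron A B $$ (i,k) * kron C D $$ (k,j))"
    using i' j' A B C D by (simp add: scalar_prod_def atLeast0LessThan)
  also have "\<dots> = (\<Sum>p<b. \<Sum>q<d. kron A B $$ (i,p*d+q) * kron C D $$ (p*d+q,j))"
    by (rule sum_div_mod_split[OF d])
  also have "\<dots> = (\<Sum>p<b. \<Sum>q<d. (A $$ (i div c, p) * C $$ (p, j div f)) * (B $$ (i mod c, q) * D $$ (q, j mod f)))"
  proof (intro sum.cong refl)
    fix p q assume p: "p \<in> {..<b}" and q: "q \<in> {..<d}"
    have k: "p*d+q < b*d"
    proof -
      have "p*d+q < p*d + d" using q by simp
      also have "\<dots> = Suc p * d" by simp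
      also have "\<dots> \<le> b*d" using p by (intro mult_right_mono) auto
      finally show ?thesis .
    qed
    have dm: "(p*d+q) div d = p" "(p*d+q) mod d = q" using q d by auto
    show "kron A B $$ (i,p*d+q) * kron C D $$ (p*d+q,j) = (A $$ (i div c, p) * C $$ (p, j div f)) * (B $$ (i mod c, q) * D $$ (q, j mod f))"
      using i' j' k q A B C D by (simp add: index_kron dm) (simp add: ac_simps)
  qed
  also have "\<dots> = (\<Sum>p<b. A $$ (i div c, p) * C $$ (p, j div f)) * (\<Sum>q<d. B $$ (i mod c, q) * D $$ (q, j mod f))"
    by (simp add: sum_product)
  also have "\<dots> = kron (A * C) (B * D) $$ (i,j)"
    using i' j' A B C D id by (simp add: index_kron scalar_prod_def atLeast0LessThan)
  finally show "(kron A B * kron C D) $$ (i,j) = kron (A * C) (B * D) $$ (i,j)" .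
qed

lemma kron_one: assumes "0 < b" shows "kron (1\<^sub>m a) (1\<^sub>m b) = (1\<^sub>m (a*b) :: 'a :: semiring_1 mat)"
proof (rule eq_matI)
  fix i j assume i: "i < dim_row (1\<^sub>m (a*b) :: 'a mat)" and j: "j < dim_col (1\<^sub>m (a*b) :: 'a mat)"
  hence i': "i < a*b" and j': "j < a*b" by auto
  have "i div b < a" "j div b < a" using i' j' by (auto simp: less_mult_imp_div_less)
  moreover have "(i = j) = (i div b = j div b \<and> i mod b = j mod b)"
    by (metis div_mult_mod_eq)
  ultimately show "kron (1\<^sub>m a) (1\<^sub>m b) $$ (i,j) = (1\<^sub>m (a*b) :: 'a mat) $$ (i,j)"
    using i' j' assms by (auto simp: index_kron)
qed auto

definition antider :: "real poly \<Rightarrow> real poly" where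
  "antider q = (\<Sum>k\<le>degree q. monom (coeff q k / of_nat (Suc k)) (Suc k))"

lemma pderiv_antider: "pderiv (antider q) = q"
proof -
  have "pderiv (antider q) = (\<Sum>k\<le>degree q. monom (coeff q k) k)"
    unfolding antider_def pderiv_sum pderiv_monom
    by (intro sum.cong refl) (simp del: of_nat_Suc)
  also have "\<dots> = q" by (rule poly_as_sum_of_monoms)
  finally show ?thesis .
qed

lemma antider_0: "poly (antider q) 0 = 0"
  unfolding antider_def by (simp add: poly_sum poly_monom)

lemma degree_antider: "degree (antider q) \<le> Suc (degree q)"
  unfolding antider_def
  by (intro degree_sum_le) (auto intro: order.trans[OF degree_monom_le])

lemma integral_poly: assumes "0 \<le> t"
  shows "integral {0..t} (poly q) = poly (antider q) t - poly (antider q) 0"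
proof -
  have "(poly q has_integral poly (antider q) t - poly (antider q) 0) {0..t}"
  proof (rule fundamental_theorem_of_calculus[OF assms])
    fix x :: real
    have "(poly (antider q) has_real_derivative poly (pderiv (antider q)) x) (at x within {0..t})"
      by (rule DERIV_subset[OF poly_DERIV]) auto
    thus "(poly (antider q) has_vector_derivative poly q x) (at x within {0..t})"
      by (simp add: pderiv_antider has_real_derivative_iff_has_vector_derivative)
  qed
  thus ?thesis by (rule integral_unique)
qed

locale nodes =
  fixes M :: nat and \<tau> :: "nat \<Rightarrow> real"
  assumes Mpos: "0 < M" and pos: "0 < \<tau> 0" and mono: "\<And>i. Suc i < M \<Longrightarrow> \<tau> i < \<tau> (Suc i)"
begin

lemma strict: "i < j \<Longrightarrow> j < M \<Longrightarrow> \<tau> i < \<tau> j"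
proof (induction j)
  case 0 thus ?case by simp
next
  case (Suc j)
  show ?case
  proof (cases "i = j")
    case True thus ?thesis using mono Suc by auto
  next
    case False
    hence "\<tau> i < \<tau> j" using Suc by auto
    also have "\<tau> j < \<tau> (Suc j)" using mono Suc by auto
    finally show ?thesis .
  qed
qed

lemma tau_pos: "i < M \<Longrightarrow> 0 < \<tau> i"
  using strict[of 0 i] pos by (cases i) auto

lemma tau_inj: "i < M \<Longrightarrow> j < M \<Longrightarrow> \<tau> i = \<tau> j \<Longrightarrow> i = j"
  using strict[of i j] strict[of j i] by (cases i j rule: linorder_cases) auto

lemma lagrange_delta: assumes i: "i < M" and j: "j < M"
  shows "lagrange_basis M \<tau> i (\<tau> j) = (if i = j then 1 else 0)"
proof (cases "i = j")
  case True
  have "lagrange_basis M \<tau> i (\<tau> j) = (\<Prod>k\<in>{..<M} - {i}. 1)"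
    unfolding lagrange_basis_def True
    by (intro prod.cong refl) (use tau_inj j in auto)
  thus ?thesis using True by simp
next
  case False
  have "lagrange_basis M \<tau> i (\<tau> j) = 0"
    unfolding lagrange_basis_def
    by (rule prod_zero) (use False j in auto)
  thus ?thesis using False by simp
qed

definition lp :: "nat \<Rightarrow> real poly" where
  "lp i = (\<Prod>k\<in>{..<M} - {i}. Polynomial.smult (1 / (\<tau> i - \<tau> k)) [:- \<tau> k, 1:])"

lemma poly_lp: "poly (lp i) = lagrange_basis M \<tau> i"
  unfolding lp_def lagrange_basis_def
  by (rule ext) (simp add: poly_prod diff_divide_distrib)

lemma degree_lp: assumes "i < M" shows "degree (lp i) \<le> M - 1"
proof -
  have "degree (lp i) \<le> sum (degree \<circ> (\<lambda>k. Polynomial.smult (1 / (\<tau> i - \<tau> k)) [:- \<tau> k, 1:])) ({..<M} - {i})"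
    unfolding lp_def by (rule degree_prod_sum_le) auto
  also have "\<dots> \<le> sum (\<lambda>k. 1) ({..<M} - {i})"
    by (intro sum_mono) (simp add: degree_smult_le)
  also have "\<dots> = M - 1" using assms by simp
  finally show ?thesis .
qed

lemma real_kernel:
  assumes h: "\<And>m. m < M \<Longrightarrow> (\<Sum>j<M. integral {0..\<tau> m} (lagrange_basis M \<tau> j) * c j) = 0"
  shows "j < M \<Longrightarrow> c j = 0"
proof -
  define p where "p = (\<Sum>j<M. Polynomial.smult (c j) (lp j))"
  define P where "P = (\<Sum>j<M. Polynomial.smult (c j) (antider (lp j)))"
  have dP': "pderiv P = p" unfolding P_def p_def
    by (simp add: pderiv_sum pderiv_smult pderiv_antider)
  have degp: "degree p \<le> M - 1" unfolding p_def
  proof (intro degree_sum_le)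
    fix j assume "j \<in> {..<M}"
    thus "degree (Polynomial.smult (c j) (lp j)) \<le> M - 1"
      using degree_lp[of j] by (auto intro: order.trans[OF degree_smult_le])
  qed auto
  have degP: "degree P \<le> M" unfolding P_def
  proof (intro degree_sum_le)
    fix j assume "j \<in> {..<M}"
    hence "degree (antider (lp j)) \<le> M" using degree_antider[of "lp j"] degree_lp[of j] Mpos by auto
    thus "degree (Polynomial.smult (c j) (antider (lp j))) \<le> M" by (rule order.trans[OF degree_smult_le])
  qed auto
  have P0: "poly P 0 = 0" unfolding P_def by (simp add: poly_sum antider_0)
  have Ptau: "poly P (\<tau> m) = 0" if m: "m < M" for m
  proof -
    have "poly P (\<tau> m) = (\<Sum>j<M. c j * (poly (antider (lp j)) (\<tau> m) - poly (antider (lp j)) 0))"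
      unfolding P_def by (simp add: poly_sum antider_0)
    also have "\<dots> = (\<Sum>j<M. integral {0..\<tau> m} (lagrange_basis M \<tau> j) * c j)"
      by (intro sum.cong refl) (use tau_pos[OF m] in \<open>simp add: integral_poly poly_lp[symmetric]\<close>)
    also have "\<dots> = 0" by (rule h[OF m])
    finally show ?thesis .
  qed
  have "P = 0"
  proof (rule ccontr)
    assume "P \<noteq> 0"
    have fin: "finite {x. poly P x = 0}" by (rule poly_roots_finite[OF \<open>P \<noteq> 0\<close>])
    have sub: "insert 0 (\<tau> ` {..<M}) \<subseteq> {x. poly P x = 0}" using P0 Ptau by auto
    have "card (insert 0 (\<tau> ` {..<M})) = Suc M"
    proof -
      have "0 \<notin> \<tau> ` {..<M}" using tau_pos by force
      moreover have "inj_on \<tau> {..<M}" using tau_inj by (auto simp: inj_on_def)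
      ultimately show ?thesis by (simp add: card_image)
    qed
    with card_mono[OF fin sub] have "Suc M \<le> card {x. poly P x = 0}" by simp
    also have "\<dots> \<le> degree P" by (rule poly_roots_degree[OF \<open>P \<noteq> 0\<close>])
    finally show False using degP by simp
  qed
  hence p0: "p = 0" using dP' by simp
  assume j: "j < M"
  have "poly p (\<tau> j) = (\<Sum>i<M. c i * lagrange_basis M \<tau> i (\<tau> j))"
    unfolding p_def by (simp add: poly_sum poly_lp)
  also have "\<dots> = (\<Sum>i<M. if i = j then c i else 0)"
    by (intro sum.cong refl) (use j in \<open>simp add: lagrange_delta\<close>)
  also have "\<dots> = c j" using j by simp
  finally show "c j = 0" using p0 by simp
qed

lemma coll_det: "Determinant.det (coll_matrix M \<tau>) \<noteq> 0"
proof
  have Q: "coll_matrix M \<tau> \<in> carrier_mat M M" unfolding coll_matrix_def by simp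
  assume "Determinant.det (coll_matrix M \<tau>) = 0"
  then obtain v where v: "v \<in> carrier_vec M" "v \<noteq> 0\<^sub>v M" "coll_matrix M \<tau> *\<^sub>v v = 0\<^sub>v M"
    using det_0_iff_vec_prod_zero[OF Q] by auto
  have eq: "(\<Sum>j<M. complex_of_real (integral {0..\<tau> m} (lagrange_basis M \<tau> j)) * v $ j) = 0"
    if m: "m < M" for m
  proof -
    have "(coll_matrix M \<tau> *\<^sub>v v) $ m = 0" using v(3) m by simp
    thus ?thesis using m v(1) by (simp add: coll_matrix_def scalar_prod_def atLeast0LessThan)
  qed
  have re: "Re (v $ j) = 0" if "j < M" for j
    by (rule real_kernel[OF _ that]) (use arg_cong[where f=Re, OF eq] in \<open>simp add: Re_sum\<close>)
  have im: "Im (v $ j) = 0" if "j < M" for j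
    by (rule real_kernel[OF _ that]) (use arg_cong[where f=Im, OF eq] in \<open>simp add: Im_sum\<close>)
  have "v = 0\<^sub>v M" using v(1) re im by (intro eq_vecI) (auto simp: complex_eq_iff)
  with v(2) show False by simp
qed

end

lemma radau_nodes: "right_radau_nodes M \<tau> \<Longrightarrow> nodes M \<tau>"
  unfolding right_radau_nodes_def nodes_def by auto

lemma nilpotent_level:
  fixes X :: "'a :: semiring_1 mat"
  assumes X: "X \<in> carrier_mat n n"
    and lev: "\<And>i j. i < n \<Longrightarrow> j < n \<Longrightarrow> X $$ (i,j) \<noteq> 0 \<Longrightarrow> f i < f j"
    and bnd: "\<And>i. i < n \<Longrightarrow> f i < m" and mk: "m \<le> k"
  shows "X ^\<^sub>m k = 0\<^sub>m n n"
proof -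
  have claim: "\<forall>i j. i < n \<longrightarrow> j < n \<longrightarrow> (X ^\<^sub>m k') $$ (i,j) \<noteq> 0 \<longrightarrow> f i + k' \<le> f j" for k'
  proof (induction k')
    case 0 show ?case using X by auto
  next
    case (Suc k')
    show ?case
    proof (intro allI impI)
      fix i j assume i: "i < n" and j: "j < n" and nz: "(X ^\<^sub>m Suc k') $$ (i,j) \<noteq> 0"
      have "(X ^\<^sub>m Suc k') $$ (i,j) = (\<Sum>l<n. (X ^\<^sub>m k') $$ (i,l) * X $$ (l,j))"
        using X i j by (simp add: scalar_prod_def atLeast0LessThan)
      with nz obtain l where l: "l < n" "(X ^\<^sub>m k') $$ (i,l) \<noteq> 0" "X $$ (l,j) \<noteq> 0"
        by (metis (no_types, lifting) lessThan_iff mult_not_zero sum.neutral)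
      from Suc.IH i l have "f i + k' \<le> f l" by auto
      moreover from lev[OF l(1) j l(3)] have "f l < f j" .
      ultimately show "f i + Suc k' \<le> f j" by simp
    qed
  qed
  show ?thesis
  proof (rule eq_matI)
    fix i j assume i: "i < dim_row (0\<^sub>m n n :: 'a mat)" and j: "j < dim_col (0\<^sub>m n n :: 'a mat)"
    hence i': "i < n" and j': "j < n" by auto
    have "(X ^\<^sub>m k) $$ (i,j) = 0"
    proof (rule ccontr)
      assume "(X ^\<^sub>m k) $$ (i,j) \<noteq> 0"
      with claim[of k] i' j' have "f i + k \<le> f j" by auto
      with bnd[OF j'] mk show False by simp
    qed
    thus "(X ^\<^sub>m k) $$ (i,j) = (0\<^sub>m n n :: 'a mat) $$ (i,j)" using i' j' by simp
  qed (use X in auto)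
qed

lemma pow_step_identity:
  fixes P R X E :: "'a :: comm_ring_1 mat"
  assumes c: "P \<in> carrier_mat n n" "R \<in> carrier_mat n n" "X \<in> carrier_mat n n" "E \<in> carrier_mat n n"
  shows "P * (X + E) - R * X = (P - R) * (X + E) + R * E"
proof -
  have 1: "(P - R) * (X + E) = P * (X + E) - R * (X + E)"
    by (rule minus_mult_distrib_mat) (use c in auto)
  have 2: "R * (X + E) = R * X + R * E"
    by (rule mult_add_distrib_mat) (use c in auto)
  have "(P - R) * (X + E) + R * E = (P * (X + E) - (R * X + R * E)) + R * E"
    unfolding 1 2 ..
  also have "\<dots> = P * (X + E) - R * X"
    by (rule eq_matI) (use c in \<open>simp_all del: index_mult_mat(1)\<close>)
  finally show ?thesis by simp
qed

lemma pow_norm_bound: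
  assumes X: "X \<in> carrier_mat n n" and XB: "mnorm X \<le> B"
  shows "mnorm (X ^\<^sub>m k) \<le> real n * B ^ k"
proof (induction k)
  case 0 show ?case using X by (simp add: mnorm_one)
next
  case (Suc k)
  have "mnorm (X ^\<^sub>m Suc k) = mnorm (X ^\<^sub>m k * X)" by simp
  also have "\<dots> \<le> mnorm (X ^\<^sub>m k) * mnorm X"
    by (rule mnorm_mult[of _ n n _ n]) (use X in auto)
  also have "\<dots> \<le> (real n * B ^ k) * B"
    by (intro mult_mono Suc XB mnorm_ge0) (use mnorm_ge0[of "X ^\<^sub>m k"] Suc in linarith)
  finally show ?case by (simp add: ac_simps)
qed

lemma pow_perturb:
  assumes X: "X \<in> carrier_mat n n" and E: "E \<in> carrier_mat n n"
    and Ee: "mnorm E \<le> e" and B1: "1 \<le> B" and XB: "mnorm X + e \<le> B"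
  shows "mnorm ((X + E) ^\<^sub>m k - X ^\<^sub>m k) \<le> real k * real n * B ^ k * e"
proof (induction k)
  case 0
  have "(X + E) ^\<^sub>m 0 - X ^\<^sub>m 0 = 0\<^sub>m n n" using X E by (intro eq_matI) auto
  thus ?case by (simp add: mnorm_zero)
next
  case (Suc k)
  have e0: "0 \<le> e" using Ee mnorm_ge0[of E] by linarith
  have XB': "mnorm X \<le> B" using XB e0 by linarith
  have XE: "X + E \<in> carrier_mat n n" using X E by simp
  have XEB: "mnorm (X + E) \<le> B" using mnorm_add[OF X E] Ee XB by linarith
  have P: "(X + E) ^\<^sub>m k \<in> carrier_mat n n" using XE by simp
  have R: "X ^\<^sub>m k \<in> carrier_mat n n" using X by simp
  have cD: "(X + E) ^\<^sub>m k - X ^\<^sub>m k \<in> carrier_mat n n" using P R by (meson minus_carrier_mat)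
  have eqS: "(X + E) ^\<^sub>m Suc k - X ^\<^sub>m Suc k = ((X + E) ^\<^sub>m k - X ^\<^sub>m k) * (X + E) + X ^\<^sub>m k * E"
    using pow_step_identity[OF P R X E] by simp
  have "mnorm ((X + E) ^\<^sub>m Suc k - X ^\<^sub>m Suc k)
      \<le> mnorm (((X + E) ^\<^sub>m k - X ^\<^sub>m k) * (X + E)) + mnorm (X ^\<^sub>m k * E)"
  proof -
    have c1: "((X + E) ^\<^sub>m k - X ^\<^sub>m k) * (X + E) \<in> carrier_mat n n" using P R XE by (meson minus_carrier_mat mult_carrier_mat)
    have c2: "X ^\<^sub>m k * E \<in> carrier_mat n n" using R E by auto
    show ?thesis unfolding eqS by (rule mnorm_add[OF c1 c2])
  qed
  also have "mnorm (((X + E) ^\<^sub>m k - X ^\<^sub>m k) * (X + E)) \<le> mnorm ((X + E) ^\<^sub>m k - X ^\<^sub>m k) * mnorm (X + E)"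
    by (rule mnorm_mult[OF cD XE])
  also have "\<dots> \<le> (real k * real n * B ^ k * e) * B"
    by (intro mult_mono Suc XEB mnorm_ge0) (use mnorm_ge0 Suc in \<open>auto intro: order.trans\<close>)
  also have "mnorm (X ^\<^sub>m k * E) \<le> mnorm (X ^\<^sub>m k) * mnorm E"
    by (rule mnorm_mult[OF R E])
  also have "\<dots> \<le> (real n * B ^ k) * e"
    by (intro mult_mono pow_norm_bound[OF X XB'] Ee mnorm_ge0) (use B1 in simp)
  also have "(real n * B ^ k) * e \<le> real n * B ^ Suc k * e"
    using B1 e0 by (intro mult_right_mono mult_left_mono) (auto simp: power_increasing)
  finally show ?case by (simp add: algebra_simps)
qed

lemma ent: "A = B \<Longrightarrow> A $$ (i,j) = B $$ (i,j)" by simp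

lemma lin_aux1:
  fixes W G H :: "complex mat"
  assumes c: "W \<in> carrier_mat n n" "G \<in> carrier_mat n n" "H \<in> carrier_mat n n"
    and e: "W - \<mu> \<cdot>\<^sub>m G - H = 1\<^sub>m n"
  shows "\<mu> \<cdot>\<^sub>m G = W - H - 1\<^sub>m n"
proof (rule eq_matI)
  fix i j assume "i < dim_row (W - H - 1\<^sub>m n)" "j < dim_col (W - H - 1\<^sub>m n)"
  hence ij: "i < n" "j < n" using c by auto
  from ent[OF e, of i j] ij c show "(\<mu> \<cdot>\<^sub>m G) $$ (i,j) = (W - H - 1\<^sub>m n) $$ (i,j)"
    by (cases "i = j") (auto simp: algebra_simps)
qed (use c in auto)

lemma lin_aux2:
  fixes W WC WDQ WF WD X1 Y Z :: "complex mat"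
  assumes c: "W \<in> carrier_mat n n" "WC \<in> carrier_mat n n" "WDQ \<in> carrier_mat n n" "WF \<in> carrier_mat n n"
     "WD \<in> carrier_mat n n" "X1 \<in> carrier_mat n n" "Y \<in> carrier_mat n n" "Z \<in> carrier_mat n n"
    and f1: "WC = W - \<mu> \<cdot>\<^sub>m WDQ - WF" and f2: "W - \<mu> \<cdot>\<^sub>m WD = 1\<^sub>m n"
    and f3: "\<mu> \<cdot>\<^sub>m WDQ = X1 - Y" and f4: "\<mu> \<cdot>\<^sub>m WD = Z - 1\<^sub>m n"
  shows "1\<^sub>m n - WC = (1\<^sub>m n - Y) + (X1 - Z + WF)"
proof (rule eq_matI)
  fix i j assume "i < dim_row ((1\<^sub>m n - Y) + (X1 - Z + WF))" "j < dim_col ((1\<^sub>m n - Y) + (X1 - Z + WF))"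
  hence ij: "i < n" "j < n" using c by auto
  have e1: "WC $$ (i,j) = W $$ (i,j) - \<mu> * WDQ $$ (i,j) - WF $$ (i,j)"
    using ent[OF f1, of i j] ij c by simp
  have e2: "W $$ (i,j) - \<mu> * WD $$ (i,j) = (if i = j then 1 else 0)"
    using ent[OF f2, of i j] ij c by simp
  have e3: "\<mu> * WDQ $$ (i,j) = X1 $$ (i,j) - Y $$ (i,j)"
    using ent[OF f3, of i j] ij c by simp
  have e4: "\<mu> * WD $$ (i,j) = Z $$ (i,j) - (if i = j then 1 else 0)"
    using ent[OF f4, of i j] ij c by simp
  have e24: "W $$ (i,j) = Z $$ (i,j)" using e2 e4 by (simp add: algebra_simps)
  show "(1\<^sub>m n - WC) $$ (i,j) = ((1\<^sub>m n - Y) + (X1 - Z + WF)) $$ (i,j)"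
    using ij c e1 e24 e3 by (simp add: algebra_simps)
qed (use c in auto)

lemma inv_identity:
  fixes W P D Dinv F :: "complex mat"
  assumes c: "W \<in> carrier_mat n n" "D \<in> carrier_mat n n" "Dinv \<in> carrier_mat n n" "F \<in> carrier_mat n n"
    and PW: "P * W = 1\<^sub>m n" and DD: "Dinv * D = 1\<^sub>m n" and P: "P = 1\<^sub>m n - \<mu> \<cdot>\<^sub>m D - F"
  shows "\<mu> \<cdot>\<^sub>m W = Dinv * (W - F * W - 1\<^sub>m n)"
proof -
  have "P * W = (1\<^sub>m n - \<mu> \<cdot>\<^sub>m D) * W - F * W" unfolding P
    by (rule minus_mult_distrib_mat) (use c in auto)
  also have "(1\<^sub>m n - \<mu> \<cdot>\<^sub>m D) * W = 1\<^sub>m n * W - (\<mu> \<cdot>\<^sub>m D) * W"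
    by (rule minus_mult_distrib_mat) (use c in auto)
  also have "(\<mu> \<cdot>\<^sub>m D) * W = \<mu> \<cdot>\<^sub>m (D * W)" by (rule mult_smult_assoc_mat) (use c in auto)
  finally have 1: "W - \<mu> \<cdot>\<^sub>m (D * W) - F * W = 1\<^sub>m n" using PW c by simp
  have 2: "\<mu> \<cdot>\<^sub>m (D * W) = W - F * W - 1\<^sub>m n"
    by (rule lin_aux1[OF _ _ _ 1]) (use c in auto)
  have "\<mu> \<cdot>\<^sub>m W = \<mu> \<cdot>\<^sub>m ((Dinv * D) * W)" using DD c by simp
  also have "(Dinv * D) * W = Dinv * (D * W)" by (rule assoc_mult_mat) (use c in auto)
  also have "\<mu> \<cdot>\<^sub>m (Dinv * (D * W)) = Dinv * (\<mu> \<cdot>\<^sub>m (D * W))"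
    by (rule mult_smult_distrib[symmetric]) (use c in auto)
  finally show ?thesis unfolding 2 .
qed

lemma inv_identity0:
  fixes W P D Dinv :: "complex mat"
  assumes c: "W \<in> carrier_mat n n" "D \<in> carrier_mat n n" "Dinv \<in> carrier_mat n n"
    and PW: "P * W = 1\<^sub>m n" and DD: "Dinv * D = 1\<^sub>m n" and P: "P = 1\<^sub>m n - \<mu> \<cdot>\<^sub>m D"
  shows "\<mu> \<cdot>\<^sub>m W = Dinv * W - Dinv"
proof -
  have P': "P = 1\<^sub>m n - \<mu> \<cdot>\<^sub>m D - 0\<^sub>m n n" unfolding P by (rule eq_matI) (use c in auto)
  have "\<mu> \<cdot>\<^sub>m W = Dinv * (W - 0\<^sub>m n n * W - 1\<^sub>m n)"
    by (rule inv_identity[OF c zero_carrier_mat PW DD P'])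
  also have "W - 0\<^sub>m n n * W - 1\<^sub>m n = W - 1\<^sub>m n" by (rule eq_matI) (use c in auto)
  also have "Dinv * (W - 1\<^sub>m n) = Dinv * W - Dinv * 1\<^sub>m n"
    by (rule mult_minus_distrib_mat) (use c in auto)
  finally show ?thesis using c by simp
qed

lemma TS_identity:
  fixes W P C DQ D Dinv F :: "complex mat"
  assumes c: "W \<in> carrier_mat n n" "D \<in> carrier_mat n n" "Dinv \<in> carrier_mat n n"
       "DQ \<in> carrier_mat n n" "F \<in> carrier_mat n n"
    and PW: "P * W = 1\<^sub>m n" and WP: "W * P = 1\<^sub>m n" and DD: "Dinv * D = 1\<^sub>m n"
    and P: "P = 1\<^sub>m n - \<mu> \<cdot>\<^sub>m D" and C: "C = 1\<^sub>m n - \<mu> \<cdot>\<^sub>m DQ - F"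
  shows "1\<^sub>m n - W * C = (1\<^sub>m n - Dinv * DQ) + ((Dinv * W) * DQ - (Dinv * W) * D + W * F)"
proof -
  have muW: "\<mu> \<cdot>\<^sub>m W = Dinv * W - Dinv" by (rule inv_identity0[OF c(1-3) PW DD P])
  have f1: "W * C = W - \<mu> \<cdot>\<^sub>m (W * DQ) - W * F"
  proof -
    have "W * C = W * (1\<^sub>m n - \<mu> \<cdot>\<^sub>m DQ) - W * F" unfolding C
      by (rule mult_minus_distrib_mat) (use c in auto)
    also have "W * (1\<^sub>m n - \<mu> \<cdot>\<^sub>m DQ) = W * 1\<^sub>m n - W * (\<mu> \<cdot>\<^sub>m DQ)"
      by (rule mult_minus_distrib_mat) (use c in auto)
    also have "W * (\<mu> \<cdot>\<^sub>m DQ) = \<mu> \<cdot>\<^sub>m (W * DQ)" by (rule mult_smult_distrib) (use c in auto)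
    finally show ?thesis using c by simp
  qed
  have f2: "W - \<mu> \<cdot>\<^sub>m (W * D) = 1\<^sub>m n"
  proof -
    have "W * P = W * 1\<^sub>m n - W * (\<mu> \<cdot>\<^sub>m D)" unfolding P
      by (rule mult_minus_distrib_mat) (use c in auto)
    also have "W * (\<mu> \<cdot>\<^sub>m D) = \<mu> \<cdot>\<^sub>m (W * D)" by (rule mult_smult_distrib) (use c in auto)
    finally show ?thesis using c WP by simp
  qed
  have f3: "\<mu> \<cdot>\<^sub>m (W * DQ) = (Dinv * W) * DQ - Dinv * DQ"
  proof -
    have "\<mu> \<cdot>\<^sub>m (W * DQ) = (\<mu> \<cdot>\<^sub>m W) * DQ" by (rule mult_smult_assoc_mat[symmetric]) (use c in auto)
    also have "\<dots> = (Dinv * W - Dinv) * DQ" unfolding muW ..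
    also have "\<dots> = (Dinv * W) * DQ - Dinv * DQ" by (rule minus_mult_distrib_mat) (use c in auto)
    finally show ?thesis .
  qed
  have f4: "\<mu> \<cdot>\<^sub>m (W * D) = (Dinv * W) * D - 1\<^sub>m n"
  proof -
    have "\<mu> \<cdot>\<^sub>m (W * D) = (\<mu> \<cdot>\<^sub>m W) * D" by (rule mult_smult_assoc_mat[symmetric]) (use c in auto)
    also have "\<dots> = (Dinv * W - Dinv) * D" unfolding muW ..
    also have "\<dots> = (Dinv * W) * D - Dinv * D" by (rule minus_mult_distrib_mat) (use c in auto)
    finally show ?thesis using DD by simp
  qed
  show ?thesis
  proof -
    have cC: "C \<in> carrier_mat n n" unfolding C using c by auto
    show ?thesis by (rule lin_aux2[OF _ _ _ _ _ _ _ _ f1 f2 f3 f4]) (use c cC in auto)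
  qed
qed

lemma invertible_inv:
  fixes P :: "'a :: semiring_1 mat"
  assumes P: "P \<in> carrier_mat n n" and inv: "invertible_mat P"
  shows "\<exists>B. B \<in> carrier_mat n n \<and> P * B = 1\<^sub>m n \<and> B * P = 1\<^sub>m n"
proof -
  from inv obtain B where i1: "inverts_mat P B" and i2: "inverts_mat B P" unfolding invertible_mat_def by blast
  have PB: "P * B = 1\<^sub>m n" using i1 P unfolding inverts_mat_def by (simp add: carrier_matD)
  have BP: "B * P = 1\<^sub>m (dim_row B)" using i2 unfolding inverts_mat_def .
  have "dim_col B = n" using arg_cong[OF PB, of dim_col] by simp
  moreover have "dim_row B = n" using arg_cong[OF BP, of dim_col] P by simp
  ultimately have Bc: "B \<in> carrier_mat n n" by (intro carrier_matI)
  have "B * P = 1\<^sub>m n" using BP \<open>dim_row B = n\<close> by simp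
  thus ?thesis using PB Bc by blast
qed

lemma mat_inv_props:
  assumes P: "P \<in> carrier_mat n n" and inv: "invertible_mat P"
  shows "mat_inv P \<in> carrier_mat n n" "P * mat_inv P = 1\<^sub>m n" "mat_inv P * P = 1\<^sub>m n"
proof -
  from inv have ex: "\<exists>B. inverts_mat P B \<and> inverts_mat B P" unfolding invertible_mat_def by blast
  have ii: "inverts_mat P (mat_inv P) \<and> inverts_mat (mat_inv P) P"
    unfolding mat_inv_def by (rule someI_ex[OF ex])
  have PB: "P * mat_inv P = 1\<^sub>m n" using conjunct1[OF ii] P unfolding inverts_mat_def by (simp add: carrier_matD)
  have BP: "mat_inv P * P = 1\<^sub>m (dim_row (mat_inv P))" using conjunct2[OF ii] unfolding inverts_mat_def .
  have "dim_col (mat_inv P) = n" using arg_cong[OF PB, of dim_col] by simp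
  moreover have "dim_row (mat_inv P) = n" using arg_cong[OF BP, of dim_col] P by simp
  ultimately show "mat_inv P \<in> carrier_mat n n" by (intro carrier_matI)
  show "P * mat_inv P = 1\<^sub>m n" by (rule PB)
  show "mat_inv P * P = 1\<^sub>m n" using BP \<open>dim_row (mat_inv P) = n\<close> by simp
qed

lemma W_norm_bound:
  fixes W Dinv :: "complex mat" and \<mu> :: real
  assumes c: "W \<in> carrier_mat n n" "Dinv \<in> carrier_mat n n" and mu: "0 < \<mu>"
    and muW: "complex_of_real \<mu> \<cdot>\<^sub>m W = Dinv * W - Dinv" and big: "2 * mnorm Dinv \<le> \<mu>"
  shows "mnorm W \<le> 2 * mnorm Dinv / \<mu>"
proof -
  have "\<mu> * mnorm W = mnorm (complex_of_real \<mu> \<cdot>\<^sub>m W)" using mu by (simp add: mnorm_smult)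
  also have "\<dots> \<le> mnorm (Dinv * W) + mnorm Dinv" unfolding muW
    by (rule mnorm_minus) (use c in auto)
  also have "mnorm (Dinv * W) \<le> mnorm Dinv * mnorm W" by (rule mnorm_mult[OF c(2) c(1)])
  also have "mnorm Dinv * mnorm W \<le> (\<mu> / 2) * mnorm W"
    using big by (intro mult_right_mono mnorm_ge0) auto
  finally have "\<mu> * mnorm W \<le> (\<mu>/2) * mnorm W + mnorm Dinv" by simp
  hence "\<mu> * mnorm W \<le> 2 * mnorm Dinv" by simp
  thus ?thesis using mu by (simp add: field_simps)
qed

lemma Wc_norm_bound:
  fixes W Dinv F :: "complex mat" and \<mu> :: real
  assumes c: "W \<in> carrier_mat n n" "Dinv \<in> carrier_mat n n" "F \<in> carrier_mat n n" and mu: "0 < \<mu>"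
    and muW: "complex_of_real \<mu> \<cdot>\<^sub>m W = Dinv * (W - F * W - 1\<^sub>m n)"
    and big: "2 * mnorm Dinv * (1 + mnorm F) \<le> \<mu>"
  shows "mnorm W \<le> 2 * mnorm Dinv * real n / \<mu>"
proof -
  have c2: "W - F * W \<in> carrier_mat n n" using c by auto
  have "\<mu> * mnorm W = mnorm (complex_of_real \<mu> \<cdot>\<^sub>m W)" using mu by (simp add: mnorm_smult)
  also have "\<dots> \<le> mnorm Dinv * mnorm (W - F * W - 1\<^sub>m n)" unfolding muW
    by (rule mnorm_mult) (use c in auto)
  also have "mnorm (W - F * W - 1\<^sub>m n) \<le> mnorm (W - F * W) + mnorm (1\<^sub>m n)"
    by (rule mnorm_minus[OF c2]) auto
  also have "mnorm (W - F * W) \<le> mnorm W + mnorm (F * W)"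
    by (rule mnorm_minus) (use c in auto)
  also have "mnorm (F * W) \<le> mnorm F * mnorm W" by (rule mnorm_mult[OF c(3) c(1)])
  finally have "\<mu> * mnorm W \<le> mnorm Dinv * (mnorm W + mnorm F * mnorm W + real n)"
    using mnorm_ge0[of Dinv] by (simp add: mnorm_one mult_left_mono)
  also have "\<dots> = (mnorm Dinv * (1 + mnorm F)) * mnorm W + mnorm Dinv * real n" by (simp add: algebra_simps)
  also have "(mnorm Dinv * (1 + mnorm F)) * mnorm W \<le> (\<mu> / 2) * mnorm W"
    using big by (intro mult_right_mono mnorm_ge0) auto
  finally have "\<mu> * mnorm W \<le> 2 * (mnorm Dinv * real n)" by simp
  thus ?thesis using mu by (simp add: field_simps)
qed

lemma core:
  fixes D DQ F Dinv Dc Fc Dcinv TCF TFC :: "complex mat" and n m k :: nat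
  assumes n: "0 < n"
    and cD: "D \<in> carrier_mat n n" "DQ \<in> carrier_mat n n" "F \<in> carrier_mat n n" "Dinv \<in> carrier_mat n n"
    and cDc: "Dc \<in> carrier_mat m m" "Fc \<in> carrier_mat m m" "Dcinv \<in> carrier_mat m m"
    and cT: "TCF \<in> carrier_mat n m" "TFC \<in> carrier_mat m n"
    and DD: "Dinv * D = 1\<^sub>m n" and DDc: "Dcinv * Dc = 1\<^sub>m m"
    and nil: "(1\<^sub>m n - Dinv * DQ) ^\<^sub>m k = 0\<^sub>m n n"
  shows "\<exists>\<mu>s>0. \<exists>c>0. \<forall>\<mu>::real. \<mu> > \<mu>s \<longrightarrow>
     invertible_mat (1\<^sub>m n - complex_of_real \<mu> \<cdot>\<^sub>m D) \<longrightarrow>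
     invertible_mat (1\<^sub>m m - complex_of_real \<mu> \<cdot>\<^sub>m Dc - Fc) \<longrightarrow>
     spectral_radius ((1\<^sub>m n - mat_inv (1\<^sub>m n - complex_of_real \<mu> \<cdot>\<^sub>m D) * (1\<^sub>m n - complex_of_real \<mu> \<cdot>\<^sub>m DQ - F)) ^\<^sub>m k *
        (1\<^sub>m n - TCF * mat_inv (1\<^sub>m m - complex_of_real \<mu> \<cdot>\<^sub>m Dc - Fc) * TFC * (1\<^sub>m n - complex_of_real \<mu> \<cdot>\<^sub>m DQ - F))) \<le> c / \<mu>"
proof -
  define d where "d = mnorm Dinv"
  define q where "q = mnorm DQ"
  define dd where "dd = mnorm D"
  define f where "f = mnorm F"
  define dc where "dc = mnorm Dcinv"
  define fc where "fc = mnorm Fc"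
  define tcf where "tcf = mnorm TCF"
  define tfc where "tfc = mnorm TFC"
  define X where "X = 1\<^sub>m n - Dinv * DQ"
  define x where "x = mnorm X"
  define c1 where "c1 = 2 * d * (d * (q + dd) + f)"
  define B where "B = x + c1 + 1"
  define G where "G = real n + tcf * tfc * (2 * dc * real m) * (real n + q + f)"
  define cc where "cc = real k * real n * B ^ k * c1 * G + 1"
  define \<mu>s where "\<mu>s = 1 + 2 * d + 2 * dc * (1 + fc)"
  have nn: "0 \<le> d" "0 \<le> q" "0 \<le> dd" "0 \<le> f" "0 \<le> dc" "0 \<le> fc" "0 \<le> tcf" "0 \<le> tfc" "0 \<le> x"
    unfolding d_def q_def dd_def f_def dc_def fc_def tcf_def tfc_def x_def by (simp_all add: mnorm_ge0)
  have c10: "0 \<le> c1" unfolding c1_def using nn by simp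
  have B1: "1 \<le> B" unfolding B_def using nn c10 by simp
  have G0: "0 \<le> G" unfolding G_def using nn by simp
  have "0 \<le> real k * real n * B ^ k * c1 * G" using c10 B1 G0 by (intro mult_nonneg_nonneg) auto
  hence cc0: "0 < cc" unfolding cc_def by linarith
  have dcfc: "0 \<le> dc * (1 + fc)" using nn by simp
  have mus0: "0 < \<mu>s" unfolding \<mu>s_def using nn dcfc by linarith
  have cX: "X \<in> carrier_mat n n" unfolding X_def using cD by auto
  have main: "spectral_radius ((1\<^sub>m n - mat_inv (1\<^sub>m n - complex_of_real \<mu> \<cdot>\<^sub>m D) * (1\<^sub>m n - complex_of_real \<mu> \<cdot>\<^sub>m DQ - F)) ^\<^sub>m k *
        (1\<^sub>m n - TCF * mat_inv (1\<^sub>m m - complex_of_real \<mu> \<cdot>\<^sub>m Dc - Fc) * TFC * (1\<^sub>m n - complex_of_real \<mu> \<cdot>\<^sub>m DQ - F))) \<le> cc / \<mu>"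
    if mu: "\<mu> > \<mu>s" and inv1: "invertible_mat (1\<^sub>m n - complex_of_real \<mu> \<cdot>\<^sub>m D)"
      and inv2: "invertible_mat (1\<^sub>m m - complex_of_real \<mu> \<cdot>\<^sub>m Dc - Fc)" for \<mu> :: real
  proof -
    define Ph where "Ph = 1\<^sub>m n - complex_of_real \<mu> \<cdot>\<^sub>m D"
    define Pc where "Pc = 1\<^sub>m m - complex_of_real \<mu> \<cdot>\<^sub>m Dc - Fc"
    define C where "C = 1\<^sub>m n - complex_of_real \<mu> \<cdot>\<^sub>m DQ - F"
    define W where "W = mat_inv Ph"
    define Wc where "Wc = mat_inv Pc"
    have mu1: "1 \<le> \<mu>" and mu0: "0 < \<mu>" and mud: "2 * d \<le> \<mu>" and mudc: "2 * dc * (1 + fc) \<le> \<mu>"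
      using mu nn dcfc unfolding \<mu>s_def by linarith+
    have cPh: "Ph \<in> carrier_mat n n" unfolding Ph_def using cD by auto
    have cPc: "Pc \<in> carrier_mat m m" unfolding Pc_def using cDc by auto
    have cC: "C \<in> carrier_mat n n" unfolding C_def using cD by auto
    note Wp = mat_inv_props[OF cPh inv1[folded Ph_def], folded W_def]
    note Wcp = mat_inv_props[OF cPc inv2[folded Pc_def], folded Wc_def]
    have muW: "complex_of_real \<mu> \<cdot>\<^sub>m W = Dinv * W - Dinv"
      by (rule inv_identity0[OF Wp(1) cD(1) cD(4) Wp(2) DD Ph_def])
    have wb: "mnorm W \<le> 2 * d / \<mu>" unfolding d_def
      by (rule W_norm_bound[OF Wp(1) cD(4) mu0 muW]) (use mud d_def in simp)
    have w0: "0 \<le> mnorm W" by (rule mnorm_ge0)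
    have muWc: "complex_of_real \<mu> \<cdot>\<^sub>m Wc = Dcinv * (Wc - Fc * Wc - 1\<^sub>m m)"
      by (rule inv_identity[OF Wcp(1) cDc(1) cDc(3) cDc(2) Wcp(2) DDc Pc_def])
    have wcb: "mnorm Wc \<le> 2 * dc * real m / \<mu>" unfolding dc_def
      by (rule Wc_norm_bound[OF Wcp(1) cDc(3) cDc(2) mu0 muWc]) (use mudc dc_def fc_def in simp)
    define E1 where "E1 = (Dinv * W) * DQ - (Dinv * W) * D + W * F"
    have cE1: "E1 \<in> carrier_mat n n" unfolding E1_def using cD Wp(1) by auto
    have TS: "1\<^sub>m n - W * C = X + E1" unfolding X_def E1_def
      by (rule TS_identity[OF Wp(1) cD(1) cD(4) cD(2) cD(3) Wp(2) Wp(3) DD Ph_def C_def])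
    have E1b: "mnorm E1 \<le> c1 / \<mu>"
    proof -
      have cDW: "Dinv * W \<in> carrier_mat n n" using cD Wp(1) by auto
      have "mnorm E1 \<le> mnorm ((Dinv * W) * DQ - (Dinv * W) * D) + mnorm (W * F)"
        unfolding E1_def by (rule mnorm_add) (use cD Wp(1) in auto)
      also have "mnorm ((Dinv * W) * DQ - (Dinv * W) * D) \<le> mnorm ((Dinv * W) * DQ) + mnorm ((Dinv * W) * D)"
        by (rule mnorm_minus) (use cD Wp(1) in auto)
      also have "mnorm ((Dinv * W) * DQ) \<le> mnorm (Dinv * W) * q" unfolding q_def by (rule mnorm_mult[OF cDW cD(2)])
      also have "mnorm ((Dinv * W) * D) \<le> mnorm (Dinv * W) * dd" unfolding dd_def by (rule mnorm_mult[OF cDW cD(1)])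
      also have "mnorm (W * F) \<le> mnorm W * f" unfolding f_def by (rule mnorm_mult[OF Wp(1) cD(3)])
      finally have 1: "mnorm E1 \<le> mnorm (Dinv * W) * (q + dd) + mnorm W * f" by (simp add: algebra_simps)
      have 2: "mnorm (Dinv * W) \<le> d * mnorm W" unfolding d_def by (rule mnorm_mult[OF cD(4) Wp(1)])
      have "mnorm (Dinv * W) * (q + dd) \<le> (d * mnorm W) * (q + dd)"
        using 2 nn by (intro mult_right_mono) auto
      with 1 have "mnorm E1 \<le> mnorm W * (d * (q + dd) + f)" by (simp add: algebra_simps)
      also have "\<dots> \<le> (2 * d / \<mu>) * (d * (q + dd) + f)"
        using wb nn by (intro mult_right_mono) auto
      also have "\<dots> = c1 / \<mu>" unfolding c1_def by simp
      finally show ?thesis .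
    qed
    have e1: "c1 / \<mu> \<le> c1" using mu1 c10 mu0
      by (simp add: divide_le_eq) (metis mult_le_cancel_left1 linorder_not_le order.strict_trans2)
    have TSk: "mnorm ((1\<^sub>m n - W * C) ^\<^sub>m k) \<le> real k * real n * B ^ k * (c1 / \<mu>)"
    proof -
      have "(1\<^sub>m n - W * C) ^\<^sub>m k = (X + E1) ^\<^sub>m k - X ^\<^sub>m k"
        unfolding TS nil[folded X_def] by (rule eq_matI) (use cX cE1 in auto)
      also have "mnorm \<dots> \<le> real k * real n * B ^ k * (c1 / \<mu>)"
        by (rule pow_perturb[OF cX cE1 E1b B1]) (use e1 B_def x_def in simp)
      finally show ?thesis .
    qed
    have Cb: "mnorm C \<le> real n + \<mu> * q + f"
    proof -
      have "mnorm C \<le> mnorm (1\<^sub>m n - complex_of_real \<mu> \<cdot>\<^sub>m DQ) + mnorm F"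
        unfolding C_def by (rule mnorm_minus) (use cD in auto)
      also have "mnorm (1\<^sub>m n - complex_of_real \<mu> \<cdot>\<^sub>m DQ) \<le> mnorm (1\<^sub>m n) + mnorm (complex_of_real \<mu> \<cdot>\<^sub>m DQ)"
        by (rule mnorm_minus) (use cD in auto)
      finally show ?thesis using mu0 by (simp add: mnorm_one mnorm_smult q_def f_def)
    qed
    have TCGCb: "mnorm (1\<^sub>m n - TCF * Wc * TFC * C) \<le> G"
    proof -
      have c1': "TCF * Wc \<in> carrier_mat n m" using cT Wcp(1) by auto
      have c2': "TCF * Wc * TFC \<in> carrier_mat n n" using c1' cT by auto
      have "mnorm (1\<^sub>m n - TCF * Wc * TFC * C) \<le> mnorm (1\<^sub>m n) + mnorm (TCF * Wc * TFC * C)"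
        by (rule mnorm_minus) (use c2' cC in auto)
      also have "mnorm (TCF * Wc * TFC * C) \<le> mnorm (TCF * Wc * TFC) * mnorm C" by (rule mnorm_mult[OF c2' cC])
      also have "mnorm (TCF * Wc * TFC) \<le> mnorm (TCF * Wc) * tfc" unfolding tfc_def by (rule mnorm_mult[OF c1' cT(2)])
      also have "mnorm (TCF * Wc) \<le> tcf * mnorm Wc" unfolding tcf_def by (rule mnorm_mult[OF cT(1) Wcp(1)])
      finally have 1: "mnorm (1\<^sub>m n - TCF * Wc * TFC * C) \<le> real n + tcf * mnorm Wc * tfc * mnorm C"
        using nn mnorm_ge0[of C] mnorm_ge0[of "TCF * Wc"] mnorm_ge0[of "TCF * Wc * TFC"]
        by (simp add: mnorm_one mult_right_mono)
      have "tcf * mnorm Wc * tfc * mnorm C \<le> tcf * (2 * dc * real m / \<mu>) * tfc * (real n + \<mu> * q + f)"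
        using nn wcb Cb mnorm_ge0[of C] mnorm_ge0[of Wc] mu0
        by (intro mult_mono mult_left_mono mult_right_mono) auto
      also have "\<dots> = tcf * tfc * (2 * dc * real m) * ((real n + f) / \<mu> + q)"
        using mu0 by (simp add: field_simps)
      also have "\<dots> \<le> tcf * tfc * (2 * dc * real m) * (real n + q + f)"
      proof -
        have "(real n + f) / \<mu> \<le> real n + f" using mu1 nn mu0
          by (simp add: divide_le_eq) (metis add_nonneg_nonneg mult_le_cancel_left1 linorder_not_le of_nat_0_le_iff order.strict_trans2)
        thus ?thesis using nn by (intro mult_left_mono) auto
      qed
      finally show ?thesis using 1 unfolding G_def by linarith
    qed
    have cTS: "(1\<^sub>m n - W * C) ^\<^sub>m k \<in> carrier_mat n n" using Wp(1) cC by auto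
    have cTC: "1\<^sub>m n - TCF * Wc * TFC * C \<in> carrier_mat n n" using cT Wcp(1) cC by auto
    have "spectral_radius ((1\<^sub>m n - W * C) ^\<^sub>m k * (1\<^sub>m n - TCF * Wc * TFC * C))
        \<le> mnorm ((1\<^sub>m n - W * C) ^\<^sub>m k * (1\<^sub>m n - TCF * Wc * TFC * C))"
      by (rule spectral_radius_le_mnorm[OF _ n]) (use cTS cTC in auto)
    also have "\<dots> \<le> mnorm ((1\<^sub>m n - W * C) ^\<^sub>m k) * mnorm (1\<^sub>m n - TCF * Wc * TFC * C)"
      by (rule mnorm_mult[OF cTS cTC])
    also have "\<dots> \<le> (real k * real n * B ^ k * (c1 / \<mu>)) * G"
    proof -
      have "0 \<le> real k * real n * B ^ k * (c1 / \<mu>)" using c10 B1 mu0 by (intro mult_nonneg_nonneg) auto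
      thus ?thesis using TSk TCGCb mnorm_ge0 by (intro mult_mono) auto
    qed
    also have "\<dots> = (real k * real n * B ^ k * c1 * G) / \<mu>" by simp
    also have "\<dots> \<le> cc / \<mu>" unfolding cc_def using mu0 by (simp add: divide_right_mono)
    finally show ?thesis unfolding W_def Wc_def C_def Ph_def Pc_def .
  qed
  show ?thesis using mus0 cc0 main by blast
qed

lemma det_inv:
  fixes A :: "complex mat"
  assumes A: "A \<in> carrier_mat n n" and d: "Determinant.det A \<noteq> 0"
  shows "\<exists>B. B \<in> carrier_mat n n \<and> B * A = 1\<^sub>m n \<and> A * B = 1\<^sub>m n"
proof -
  from det_non_zero_imp_unit[OF A d, of "()"]
  have "A \<in> Units (ring_mat TYPE(complex) n ())" .
  thus ?thesis unfolding Units_def ring_mat_def by auto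
qed

lemma LU_facts:
  assumes nd: "nodes M \<tau>" and LU: "LU_trick (coll_matrix M \<tau>) QD"
  shows "\<exists>QDi LQ. QD \<in> carrier_mat M M \<and> QDi \<in> carrier_mat M M \<and> LQ \<in> carrier_mat M M \<and>
     QDi * QD = 1\<^sub>m M \<and> QDi * coll_matrix M \<tau> = transpose_mat LQ \<and> unit_lower_triangular LQ"
proof -
  let ?Q = "coll_matrix M \<tau>"
  have cQ: "?Q \<in> carrier_mat M M" unfolding coll_matrix_def by simp
  from LU obtain LQ where cQD: "QD \<in> carrier_mat M M" and cLQ: "LQ \<in> carrier_mat M M"
    and ul: "unit_lower_triangular LQ" and fac: "transpose_mat ?Q = LQ * transpose_mat QD"
    unfolding LU_trick_def using cQ by auto
  have cQDT: "transpose_mat QD \<in> carrier_mat M M" using cQD by simp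
  have "Determinant.det ?Q \<noteq> 0" by (rule nodes.coll_det[OF nd])
  hence "Determinant.det (transpose_mat ?Q) \<noteq> 0" using det_transpose[OF cQ] by simp
  hence "Determinant.det LQ * Determinant.det (transpose_mat QD) \<noteq> 0"
    unfolding fac det_mult[OF cLQ cQDT] .
  hence "Determinant.det (transpose_mat QD) \<noteq> 0" by simp
  hence "Determinant.det QD \<noteq> 0" using det_transpose[OF cQD] by simp
  from det_inv[OF cQD this] obtain QDi where cQDi: "QDi \<in> carrier_mat M M" and inv: "QDi * QD = 1\<^sub>m M" by auto
  have "?Q = transpose_mat (transpose_mat ?Q)" by simp
  also have "\<dots> = transpose_mat (LQ * transpose_mat QD)" unfolding fac ..
  also have "\<dots> = QD * transpose_mat LQ" using transpose_mult[OF cLQ cQDT] by simp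
  finally have Qeq: "?Q = QD * transpose_mat LQ" .
  have "QDi * ?Q = (QDi * QD) * transpose_mat LQ" unfolding Qeq
    by (rule assoc_mult_mat[symmetric]) (use cQDi cQD cLQ in auto)
  also have "\<dots> = transpose_mat LQ" using inv cLQ by simp
  finally show ?thesis using cQD cQDi cLQ inv ul by blast
qed

lemma kron_nil:
  fixes U :: "complex mat"
  assumes U: "U \<in> carrier_mat M M" and N: "0 < N" and M: "0 < M"
    and diag: "\<And>a. a < M \<Longrightarrow> U $$ (a,a) = 1"
    and upper: "\<And>a b. a < M \<Longrightarrow> b < M \<Longrightarrow> b < a \<Longrightarrow> U $$ (a,b) = 0"
    and k: "M \<le> k"
  shows "(1\<^sub>m (L*(M*N)) - kron (1\<^sub>m L) (kron U (1\<^sub>m N))) ^\<^sub>m k = 0\<^sub>m (L*(M*N)) (L*(M*N))"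
proof (rule nilpotent_level[where f = "\<lambda>i. (i mod (M*N)) div N" and m = M])
  show "1\<^sub>m (L*(M*N)) - kron (1\<^sub>m L) (kron U (1\<^sub>m N)) \<in> carrier_mat (L*(M*N)) (L*(M*N))"
    using U by (auto intro!: minus_carrier_mat kron_carrier)
  show "M \<le> k" by (rule k)
  have MN: "0 < M * N" using M N by simp
  show "(i mod (M*N)) div N < M" for i
    using MN N by (simp add: less_mult_imp_div_less)
  fix i j assume i: "i < L*(M*N)" and j: "j < L*(M*N)"
  assume nz: "(1\<^sub>m (L*(M*N)) - kron (1\<^sub>m L) (kron U (1\<^sub>m N))) $$ (i,j) \<noteq> 0"
  define a where "a = (i mod (M*N)) div N"
  define b where "b = (j mod (M*N)) div N"
  have ab: "a < M" "b < M" unfolding a_def b_def using MN N by (simp_all add: less_mult_imp_div_less)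
  have im: "i mod (M*N) < M*N" "j mod (M*N) < M*N" using MN by auto
  have idv: "i div (M*N) < L" "j div (M*N) < L" using i j by (auto simp: less_mult_imp_div_less)
  have K: "kron (1\<^sub>m L) (kron U (1\<^sub>m N)) $$ (i,j) =
     (if i div (M*N) = j div (M*N) then 1 else 0) * (U $$ (a,b) * (if i mod (M*N) mod N = j mod (M*N) mod N then 1 else 0))"
    using i j U im idv ab N unfolding a_def b_def by (simp add: index_kron)
  have X: "(1\<^sub>m (L*(M*N)) - kron (1\<^sub>m L) (kron U (1\<^sub>m N))) $$ (i,j) =
      (if i = j then 1 else 0) - kron (1\<^sub>m L) (kron U (1\<^sub>m N)) $$ (i,j)"
    using i j U by simp
  have eqi: "i = j" if "i div (M*N) = j div (M*N)" "a = b" "i mod (M*N) mod N = j mod (M*N) mod N"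
  proof -
    have "i mod (M*N) = j mod (M*N)" using that unfolding a_def b_def by (metis div_mult_mod_eq)
    with that(1) show ?thesis by (metis div_mult_mod_eq)
  qed
  show "a < b"
  proof (rule ccontr)
    assume "\<not> a < b"
    hence "b < a \<or> a = b" by auto
    thus False
    proof
      assume "b < a"
      hence "U $$ (a,b) = 0" using upper ab by auto
      hence "kron (1\<^sub>m L) (kron U (1\<^sub>m N)) $$ (i,j) = 0" using K by simp
      moreover have "i \<noteq> j" using \<open>b < a\<close> unfolding a_def b_def by auto
      ultimately show False using nz X by simp
    next
      assume "a = b"
      hence Uab: "U $$ (a,b) = 1" using diag ab by simp
      show False
      proof (cases "i = j")
        case True thus False using nz X K Uab by simp
      next
        case False
        hence "kron (1\<^sub>m L) (kron U (1\<^sub>m N)) $$ (i,j) = 0" using K eqi \<open>a = b\<close> by auto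
        thus False using nz X False by simp
      qed
    qed
  qed
qed

theorem theorem3:
  fixes L M N Mc Nc :: nat
    and \<tau> \<tau>c :: "nat \<Rightarrow> real"
    and QD QDc A Ac :: "complex mat"
    and TFQ TFA TCQ TCA :: "real mat"
  assumes "0 < L" "0 < M" "0 < N" "0 < Mc" "0 < Nc" "Mc \<le> M" "Nc \<le> N"
    and "right_radau_nodes M \<tau>" and "right_radau_nodes Mc \<tau>c"
    and "LU_trick (coll_matrix M \<tau>) QD" and "LU_trick (coll_matrix Mc \<tau>c) QDc"
    and "A \<in> carrier_mat N N" and "Ac \<in> carrier_mat Nc Nc"
    and "invertible_mat A" and "invertible_mat Ac"
    and "TFQ \<in> carrier_mat Mc M" and "TFA \<in> carrier_mat Nc N"
    and "TCQ \<in> carrier_mat M Mc" and "TCA \<in> carrier_mat N Nc"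
    and "kron (subdiag L) (kron (last_col_ones Mc) (1\<^sub>m Nc))
           * kron (1\<^sub>m L) (kron (real_mat TFQ) (real_mat TFA))
         = kron (1\<^sub>m L) (kron (real_mat TFQ) (real_mat TFA))
           * kron (subdiag L) (kron (last_col_ones M) (1\<^sub>m N))"
  shows "\<forall>k \<ge> M. \<exists>\<mu>s > 0. \<exists>c > 0. \<forall>\<mu> :: real. \<mu> > \<mu>s \<longrightarrow>
    (let Q = coll_matrix M \<tau>;
         H = kron (last_col_ones M) (1\<^sub>m N);
         Hc = kron (last_col_ones Mc) (1\<^sub>m Nc);
         E = subdiag L;
         C = 1\<^sub>m (L * M * N) - complex_of_real \<mu> \<cdot>\<^sub>m kron (1\<^sub>m L) (kron Q A) - kron E H;
         Ph = 1\<^sub>m (L * M * N) - complex_of_real \<mu> \<cdot>\<^sub>m kron (1\<^sub>m L) (kron QD A);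
         Pc = 1\<^sub>m (L * Mc * Nc) - complex_of_real \<mu> \<cdot>\<^sub>m kron (1\<^sub>m L) (kron QDc Ac) - kron E Hc;
         TFC = kron (1\<^sub>m L) (kron (real_mat TFQ) (real_mat TFA));
         TCF = kron (1\<^sub>m L) (kron (real_mat TCQ) (real_mat TCA));
         TS = 1\<^sub>m (L * M * N) - mat_inv Ph * C;
         TCGC = 1\<^sub>m (L * M * N) - TCF * mat_inv Pc * TFC * C
     in invertible_mat Ph \<longrightarrow> invertible_mat Pc \<longrightarrow>
        spectral_radius (TS ^\<^sub>m k * TCGC) \<le> c / \<mu>)"
proof (intro allI impI)
  fix k assume k: "M \<le> k"
  have ndM: "nodes M \<tau>" by (rule radau_nodes) fact
  have ndMc: "nodes Mc \<tau>c" by (rule radau_nodes) fact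
  from LU_facts[OF ndM assms(10)] obtain QDi LQ where
    cQD: "QD \<in> carrier_mat M M" and cQDi: "QDi \<in> carrier_mat M M" and cLQ: "LQ \<in> carrier_mat M M"
    and iQD: "QDi * QD = 1\<^sub>m M" and UQ: "QDi * coll_matrix M \<tau> = transpose_mat LQ"
    and ulQ: "unit_lower_triangular LQ" by blast
  from LU_facts[OF ndMc assms(11)] obtain QDci LQc where
    cQDc: "QDc \<in> carrier_mat Mc Mc" and cQDci: "QDci \<in> carrier_mat Mc Mc"
    and iQDc: "QDci * QDc = 1\<^sub>m Mc" by blast
  from invertible_inv[OF assms(12) assms(14)] obtain Ai where
    cAi: "Ai \<in> carrier_mat N N" and iA: "Ai * A = 1\<^sub>m N" by blast
  from invertible_inv[OF assms(13) assms(15)] obtain Aci where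
    cAci: "Aci \<in> carrier_mat Nc Nc" and iAc: "Aci * Ac = 1\<^sub>m Nc" by blast
  have cQ: "coll_matrix M \<tau> \<in> carrier_mat M M" unfolding coll_matrix_def by simp
  have cA: "A \<in> carrier_mat N N" and cAc: "Ac \<in> carrier_mat Nc Nc" by fact+
  have cI: "1\<^sub>m L \<in> carrier_mat L L" "1\<^sub>m N \<in> carrier_mat N N" by auto
  have MN: "0 < M * N" "0 < Mc * Nc" using assms(2-5) by auto
  have cE: "subdiag L \<in> carrier_mat L L" unfolding subdiag_def by simp
  have cH: "last_col_ones M \<in> carrier_mat M M" "last_col_ones Mc \<in> carrier_mat Mc Mc"
    unfolding last_col_ones_def by simp_all
  have crm: "real_mat X \<in> carrier_mat a b" if "X \<in> carrier_mat a b" for X a b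
    using that unfolding real_mat_def by auto
  let ?n = "L * M * N"
  let ?m = "L * Mc * Nc"
  let ?D = "kron (1\<^sub>m L) (kron QD A)"
  let ?DQ = "kron (1\<^sub>m L) (kron (coll_matrix M \<tau>) A)"
  let ?F = "kron (subdiag L) (kron (last_col_ones M) (1\<^sub>m N))"
  let ?Dinv = "kron (1\<^sub>m L) (kron QDi Ai)"
  let ?Dc = "kron (1\<^sub>m L) (kron QDc Ac)"
  let ?Fc = "kron (subdiag L) (kron (last_col_ones Mc) (1\<^sub>m Nc))"
  let ?Dcinv = "kron (1\<^sub>m L) (kron QDci Aci)"
  let ?TCF = "kron (1\<^sub>m L) (kron (real_mat TCQ) (real_mat TCA))"
  let ?TFC = "kron (1\<^sub>m L) (kron (real_mat TFQ) (real_mat TFA))"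
  have n0: "0 < ?n" using assms(1-3) by simp
  have cD: "?D \<in> carrier_mat ?n ?n"
    using kron_carrier[OF cI(1) kron_carrier[OF cQD cA]] by (simp add: mult.assoc)
  have cDQ: "?DQ \<in> carrier_mat ?n ?n"
    using kron_carrier[OF cI(1) kron_carrier[OF cQ cA]] by (simp add: mult.assoc)
  have cF: "?F \<in> carrier_mat ?n ?n"
    using kron_carrier[OF cE kron_carrier[OF cH(1) cI(2)]] by (simp add: mult.assoc)
  have cDinv: "?Dinv \<in> carrier_mat ?n ?n"
    using kron_carrier[OF cI(1) kron_carrier[OF cQDi cAi]] by (simp add: mult.assoc)
  have cDc: "?Dc \<in> carrier_mat ?m ?m"
    using kron_carrier[OF cI(1) kron_carrier[OF cQDc cAc]] by (simp add: mult.assoc)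
  have cFc: "?Fc \<in> carrier_mat ?m ?m"
    using kron_carrier[OF cE kron_carrier[OF cH(2) one_carrier_mat]] by (simp add: mult.assoc)
  have cDcinv: "?Dcinv \<in> carrier_mat ?m ?m"
    using kron_carrier[OF cI(1) kron_carrier[OF cQDci cAci]] by (simp add: mult.assoc)
  have cTCF: "?TCF \<in> carrier_mat ?n ?m"
    using kron_carrier[OF cI(1) kron_carrier[OF crm[OF assms(18)] crm[OF assms(19)]]] by (simp add: mult.assoc)
  have cTFC: "?TFC \<in> carrier_mat ?m ?n"
    using kron_carrier[OF cI(1) kron_carrier[OF crm[OF assms(16)] crm[OF assms(17)]]] by (simp add: mult.assoc)
  have DD: "?Dinv * ?D = 1\<^sub>m ?n"
  proof -
    have "?Dinv * ?D = kron (1\<^sub>m L * 1\<^sub>m L) (kron QDi Ai * kron QD A)"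
      by (rule kron_mult[OF cI(1) kron_carrier[OF cQDi cAi] cI(1) kron_carrier[OF cQD cA]]) (use MN in auto)
    also have "kron QDi Ai * kron QD A = kron (QDi * QD) (Ai * A)"
      by (rule kron_mult[OF cQDi cAi cQD cA]) (use assms(3) in auto)
    also have "\<dots> = 1\<^sub>m (M * N)" unfolding iQD iA by (rule kron_one) (use assms(3) in auto)
    also have "kron (1\<^sub>m L * 1\<^sub>m L) (1\<^sub>m (M * N)) = (1\<^sub>m (L * (M * N)) :: complex mat)"
      by simp (rule kron_one, use MN in auto)
    finally show ?thesis by (simp add: mult.assoc)
  qed
  have DDc: "?Dcinv * ?Dc = 1\<^sub>m ?m"
  proof -
    have "?Dcinv * ?Dc = kron (1\<^sub>m L * 1\<^sub>m L) (kron QDci Aci * kron QDc Ac)"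
      by (rule kron_mult[OF cI(1) kron_carrier[OF cQDci cAci] cI(1) kron_carrier[OF cQDc cAc]]) (use MN in auto)
    also have "kron QDci Aci * kron QDc Ac = kron (QDci * QDc) (Aci * Ac)"
      by (rule kron_mult[OF cQDci cAci cQDc cAc]) (use assms(5) in auto)
    also have "\<dots> = 1\<^sub>m (Mc * Nc)" unfolding iQDc iAc by (rule kron_one) (use assms(5) in auto)
    also have "kron (1\<^sub>m L * 1\<^sub>m L) (1\<^sub>m (Mc * Nc)) = (1\<^sub>m (L * (Mc * Nc)) :: complex mat)"
      by simp (rule kron_one, use MN in auto)
    finally show ?thesis by (simp add: mult.assoc)
  qed
  have DDQ: "?Dinv * ?DQ = kron (1\<^sub>m L) (kron (transpose_mat LQ) (1\<^sub>m N))"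
  proof -
    have "?Dinv * ?DQ = kron (1\<^sub>m L * 1\<^sub>m L) (kron QDi Ai * kron (coll_matrix M \<tau>) A)"
      by (rule kron_mult[OF cI(1) kron_carrier[OF cQDi cAi] cI(1) kron_carrier[OF cQ cA]]) (use MN in auto)
    also have "kron QDi Ai * kron (coll_matrix M \<tau>) A = kron (QDi * coll_matrix M \<tau>) (Ai * A)"
      by (rule kron_mult[OF cQDi cAi cQ cA]) (use assms(3) in auto)
    finally show ?thesis unfolding UQ iA by simp
  qed
  have nil: "(1\<^sub>m ?n - ?Dinv * ?DQ) ^\<^sub>m k = 0\<^sub>m ?n ?n"
  proof -
    have "(1\<^sub>m (L*(M*N)) - kron (1\<^sub>m L) (kron (transpose_mat LQ) (1\<^sub>m N))) ^\<^sub>m k = 0\<^sub>m (L*(M*N)) (L*(M*N))"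
    proof (rule kron_nil)
      show "transpose_mat LQ \<in> carrier_mat M M" using cLQ by simp
      show "0 < N" "0 < M" "M \<le> k" using assms(2,3) k by auto
      show "transpose_mat LQ $$ (a,a) = 1" if "a < M" for a
        using ulQ that cLQ unfolding unit_lower_triangular_def by auto
      show "transpose_mat LQ $$ (a,b) = 0" if "a < M" "b < M" "b < a" for a b
        using ulQ that cLQ unfolding unit_lower_triangular_def by auto
    qed
    thus ?thesis unfolding DDQ by (simp add: mult.assoc)
  qed
  from core[OF n0 cD cDQ cF cDinv cDc cFc cDcinv cTCF cTFC DD DDc nil]
  show "\<exists>\<mu>s>0. \<exists>c>0. \<forall>\<mu>::real. \<mu> > \<mu>s \<longrightarrow>
    (let Q = coll_matrix M \<tau>;
         H = kron (last_col_ones M) (1\<^sub>m N);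
         Hc = kron (last_col_ones Mc) (1\<^sub>m Nc);
         E = subdiag L;
         C = 1\<^sub>m (L * M * N) - complex_of_real \<mu> \<cdot>\<^sub>m kron (1\<^sub>m L) (kron Q A) - kron E H;
         Ph = 1\<^sub>m (L * M * N) - complex_of_real \<mu> \<cdot>\<^sub>m kron (1\<^sub>m L) (kron QD A);
         Pc = 1\<^sub>m (L * Mc * Nc) - complex_of_real \<mu> \<cdot>\<^sub>m kron (1\<^sub>m L) (kron QDc Ac) - kron E Hc;
         TFC = kron (1\<^sub>m L) (kron (real_mat TFQ) (real_mat TFA));
         TCF = kron (1\<^sub>m L) (kron (real_mat TCQ) (real_mat TCA));
         TS = 1\<^sub>m (L * M * N) - mat_inv Ph * C;
         TCGC = 1\<^sub>m (L * M * N) - TCF * mat_inv Pc * TFC * C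
     in invertible_mat Ph \<longrightarrow> invertible_mat Pc \<longrightarrow>
        spectral_radius (TS ^\<^sub>m k * TCGC) \<le> c / \<mu>)"
    unfolding Let_def .
qed

end
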